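(* Let $\mathcal{L}$ be a relational language, let $\mathcal{A}$ be an $\mathcal{L}$-structure, and let $\Pi\mathcal{A}=\prod_{i\in I}\mathcal{A}$ be a direct power of $\mathcal{A}$ with nonempty index set $I$. Let $\mathbf{S}=\{E_j(X)\mid j\in J\}$ be a system of $\mathcal{L}(\Pi\mathcal{A})$-equations in a finite set of variables $X$. If for some $i\in I$ the projection $\pi_i(\mathbf{S})$ is inconsistent over $\mathcal{A}$, then $\mathbf{S}$ is inconsistent over $\Pi\mathcal{A}$. Moreover, if $\mathcal{A}$ is $\mathcal{L}(\mathcal{A})$-equationally Noetherian, then every $\mathcal{L}(\Pi\mathcal{A})$-system $\mathbf{S}$ that is inconsistent over $\Pi\mathcal{A}$ is equivalent over $\Pi\mathcal{A}$ to some finite subsystem of $\mathbf{S}$.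
   Context: For an $\mathcal{L}$-structure $\mathcal{B}$, $\mathcal{L}(\mathcal{B})$ denotes $\mathcal{L}$ extended by a constant symbol for each element of $\mathcal{B}$. An $\mathcal{L}(\mathcal{B})$-equation is an atomic formula of $\mathcal{L}(\mathcal{B})$ (i.e. $R(t_1,\dots,t_n)$ with $R\in\mathcal{L}$, or $t_1=t_2$, where each $t_k$ is a variable or a constant). A system is any set of equations in a fixed finite set of variables $X=\{x_1,\dots,x_n\}$; its solution set in $\mathcal{B}$ is $V_{\mathcal{B}}(\mathbf{S})\subseteq \mathcal{B}^n$. A system is inconsistent if its solution set is empty; two systems are equivalent over $\mathcal{B}$ if they have the same solution set in $\mathcal{B}$. $\mathcal{B}$ is $\mathcal{L}(\mathcal{B})$-equationally Noetherian if every $\mathcal{L}(\mathcal{B})$-system is equivalent over $\mathcal{B}$ to a finite subsystem. The direct power $\Pi\mathcal{A}=\prod_{i\in I}\mathcal{A}$ consists of all sequences $[a_i\mid i\in I]$ with each relation $R$ holding coordinatewise: $R(\mathbf{a}^{(1)},\dots,\mathbf{a}^{(n)})$ iff $R(a^{(1)}_i,\dots,a^{(n)}_i)$ for every $i\in I$. $\pi_i$ is the projection onto the $i$-th coordinate. For an $\mathcal{L}(\Pi\mathcal{A})$-equation $E(X,\vec{\mathbf{C}})$ with constants $\vec{\mathbf{C}}$, its $i$-th projection is the $\mathcal{L}(\mathcal{A})$-equation $\pi_i(E)=E(X,\pi_i(\vec{\mathbf{C}}))$, and $\pi_i(\mathbf{S})=\{\pi_i(E_j)\mid j\in J\}$.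 *)

theory Defs
  imports Main "HOL-Library.FuncSet"
begin

record 'r lang =
  syms :: "'r set"
  ar   :: "'r \<Rightarrow> nat"

record ('r, 'a) struc =
  carrier :: "'a set"
  rel     :: "'r \<Rightarrow> 'a list \<Rightarrow> bool"

definition is_struct :: "'r lang \<Rightarrow> ('r, 'a) struc \<Rightarrow> bool" where
  "is_struct L A \<longleftrightarrow>
     (\<forall>R ts. rel A R ts \<longrightarrow> R \<in> syms L \<and> length ts = ar L R \<and> set ts \<subseteq> carrier A)"

definition dpow :: "'i set \<Rightarrow> ('r, 'a) struc \<Rightarrow> ('r, 'i \<Rightarrow> 'a) struc" where
  "dpow I A = \<lparr> carrier = (\<Pi>\<^sub>E i\<in>I. carrier A),
     rel = (\<lambda>R bs. set bs \<subseteq> (\<Pi>\<^sub>E i\<in>I. carrier A) \<and>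
                   (\<forall>i\<in>I. rel A R (map (\<lambda>b. b i) bs))) \<rparr>"

datatype 'c trm = Var nat | Const 'c

datatype ('r, 'c) eqn = Rel 'r "'c trm list" | Equ "'c trm" "'c trm"

fun wf_trm :: "('r, 'a) struc \<Rightarrow> nat \<Rightarrow> 'a trm \<Rightarrow> bool" where
  "wf_trm B n (Var k) \<longleftrightarrow> k < n"
| "wf_trm B n (Const c) \<longleftrightarrow> c \<in> carrier B"

fun wf_eqn :: "'r lang \<Rightarrow> ('r, 'a) struc \<Rightarrow> nat \<Rightarrow> ('r, 'a) eqn \<Rightarrow> bool" where
  "wf_eqn L B n (Rel R ts) \<longleftrightarrow> R \<in> syms L \<and> length ts = ar L R \<and> (\<forall>t\<in>set ts. wf_trm B n t)"
| "wf_eqn L B n (Equ s t) \<longleftrightarrow> wf_trm B n s \<and> wf_trm B n t"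

definition system :: "'r lang \<Rightarrow> ('r, 'a) struc \<Rightarrow> nat \<Rightarrow> ('r, 'a) eqn set \<Rightarrow> bool" where
  "system L B n S \<longleftrightarrow> (\<forall>e\<in>S. wf_eqn L B n e)"

fun ev :: "'a list \<Rightarrow> 'a trm \<Rightarrow> 'a" where
  "ev xs (Var k) = xs ! k"
| "ev xs (Const c) = c"

fun sat :: "('r, 'a) struc \<Rightarrow> 'a list \<Rightarrow> ('r, 'a) eqn \<Rightarrow> bool" where
  "sat B xs (Rel R ts) \<longleftrightarrow> rel B R (map (ev xs) ts)"
| "sat B xs (Equ s t) \<longleftrightarrow> ev xs s = ev xs t"

definition V :: "('r, 'a) struc \<Rightarrow> nat \<Rightarrow> ('r, 'a) eqn set \<Rightarrow> 'a list set" where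
  "V B n S = {xs. length xs = n \<and> set xs \<subseteq> carrier B \<and> (\<forall>e\<in>S. sat B xs e)}"

definition eq_noeth :: "'r lang \<Rightarrow> ('r, 'a) struc \<Rightarrow> bool" where
  "eq_noeth L B \<longleftrightarrow> (\<forall>n S. system L B n S \<longrightarrow>
      (\<exists>S0 \<subseteq> S. finite S0 \<and> V B n S0 = V B n S))"

fun proj_trm :: "'i \<Rightarrow> ('i \<Rightarrow> 'a) trm \<Rightarrow> 'a trm" where
  "proj_trm i (Var k) = Var k"
| "proj_trm i (Const c) = Const (c i)"

fun proj :: "'i \<Rightarrow> ('r, 'i \<Rightarrow> 'a) eqn \<Rightarrow> ('r, 'a) eqn" where
  "proj i (Rel R ts) = Rel R (map (proj_trm i) ts)"
| "proj i (Equ s t) = Equ (proj_trm i s) (proj_trm i t)"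

end

theory Submission
  imports Defs
begin

lemma ev_proj:
  assumes "wf_trm (dpow I A) n t" "length xs = n" "i \<in> I"
  shows "ev (map (\<lambda>b. b i) xs) (proj_trm i t) = ev xs t i"
  using assms by (cases t) auto

lemma sat_proj:
  assumes "wf_eqn L (dpow I A) n e" "length xs = n" "i \<in> I" "sat (dpow I A) xs e"
  shows "sat A (map (\<lambda>b. b i) xs) (proj i e)"
proof (cases e)
  case (Rel R ts)
  have "map (ev (map (\<lambda>b. b i) xs)) (map (proj_trm i) ts) = map (\<lambda>b. b i) (map (ev xs) ts)"
    using assms Rel by (auto simp: ev_proj)
  moreover have "rel A R (map (\<lambda>b. b i) (map (ev xs) ts))"
    using assms Rel by (simp add: dpow_def del: map_map)
  ultimately show ?thesis using Rel by (simp del: map_map)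
next
  case (Equ s t)
  then show ?thesis using assms by (auto simp: ev_proj)
qed

lemma part1:
  assumes "system L (dpow I A) n S" "i \<in> I" "V A n (proj i ` S) = {}"
  shows "V (dpow I A) n S = {}"
proof (rule ccontr)
  assume "V (dpow I A) n S \<noteq> {}"
  then obtain xs where xs: "xs \<in> V (dpow I A) n S" by blast
  have "map (\<lambda>b. b i) xs \<in> V A n (proj i ` S)"
  proof -
    have "set (map (\<lambda>b. b i) xs) \<subseteq> carrier A"
      using xs assms(2) by (auto simp: V_def dpow_def PiE_def Pi_def)
    moreover have "\<forall>e\<in>proj i ` S. sat A (map (\<lambda>b. b i) xs) e"
      using xs assms sat_proj[of L I A n _ xs i] by (auto simp: V_def system_def)
    ultimately show ?thesis using xs by (simp add: V_def)
  qed
  then show False using assms(3) by blast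
qed

lemma ev_assemble:
  assumes "wf_trm (dpow I A) n t" "\<forall>i\<in>I. length (f i) = n"
  shows "ev (map (\<lambda>k. restrict (\<lambda>i. f i ! k) I) [0..<n]) t
         = restrict (\<lambda>i. ev (f i) (proj_trm i t)) I"
proof (cases t)
  case (Var k) then show ?thesis using assms by auto
next
  case (Const c) then show ?thesis using assms
    by (auto simp: dpow_def PiE_def extensional_def restrict_def)
qed

lemma part2:
  assumes "system L (dpow I A) n S" "\<forall>i\<in>I. V A n (proj i ` S) \<noteq> {}"
  shows "V (dpow I A) n S \<noteq> {}"
proof -
  have "\<forall>i\<in>I. \<exists>ys. ys \<in> V A n (proj i ` S)" using assms(2) by blast
  then obtain f where f: "\<And>i. i \<in> I \<Longrightarrow> f i \<in> V A n (proj i ` S)" by metis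
  define xs where "xs = map (\<lambda>k. restrict (\<lambda>i. f i ! k) I) [0..<n]"
  have len: "\<forall>i\<in>I. length (f i) = n" using f by (auto simp: V_def)
  have evx: "\<And>t. wf_trm (dpow I A) n t \<Longrightarrow> ev xs t = restrict (\<lambda>i. ev (f i) (proj_trm i t)) I"
    unfolding xs_def using len ev_assemble by blast
  have incar: "\<And>t. wf_trm (dpow I A) n t \<Longrightarrow> ev xs t \<in> (\<Pi>\<^sub>E i\<in>I. carrier A)"
  proof -
    fix t assume t: "wf_trm (dpow I A) n t"
    have "\<And>i. i \<in> I \<Longrightarrow> ev (f i) (proj_trm i t) \<in> carrier A"
    proof -
      fix i assume i: "i \<in> I"
      show "ev (f i) (proj_trm i t) \<in> carrier A"
      proof (cases t)
        case (Var k)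
        then have "k < length (f i)" using t len i by auto
        then show ?thesis using f[OF i] Var by (auto simp: V_def)
      next
        case (Const c)
        then show ?thesis using t i by (auto simp: dpow_def)
      qed
    qed
    then show "ev xs t \<in> (\<Pi>\<^sub>E i\<in>I. carrier A)" using evx[OF t] by auto
  qed
  have "xs \<in> V (dpow I A) n S"
    unfolding V_def
  proof (intro CollectI conjI ballI)
    show "length xs = n" by (simp add: xs_def)
    show "set xs \<subseteq> carrier (dpow I A)"
    proof
      fix x assume "x \<in> set xs"
      then obtain k where k: "k < n" "x = restrict (\<lambda>i. f i ! k) I" by (auto simp: xs_def)
      have "x = ev xs (Var k)" using k by (simp add: xs_def)
      then show "x \<in> carrier (dpow I A)" using incar[of "Var k"] k by (simp add: dpow_def)
    qed
    fix e assume e: "e \<in> S"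
    then have wf: "wf_eqn L (dpow I A) n e" using assms(1) by (auto simp: system_def)
    have sa: "\<And>i. i \<in> I \<Longrightarrow> sat A (f i) (proj i e)" using f e by (auto simp: V_def)
    show "sat (dpow I A) xs e"
    proof (cases e)
      case (Rel R ts)
      have "\<forall>i\<in>I. rel A R (map (\<lambda>b. b i) (map (ev xs) ts))"
      proof
        fix i assume i: "i \<in> I"
        have "map (\<lambda>b. b i) (map (ev xs) ts) = map (ev (f i)) (map (proj_trm i) ts)"
          using wf Rel i evx by auto
        moreover have "rel A R (map (ev (f i)) (map (proj_trm i) ts))"
          using sa[OF i] Rel by (simp del: map_map)
        ultimately show "rel A R (map (\<lambda>b. b i) (map (ev xs) ts))" by (simp del: map_map)
      qed
      moreover have "set (map (ev xs) ts) \<subseteq> (\<Pi>\<^sub>E i\<in>I. carrier A)"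
        using wf Rel incar by auto
      ultimately show ?thesis using Rel by (simp add: dpow_def)
    next
      case (Equ s t)
      have "\<forall>i\<in>I. ev (f i) (proj_trm i s) = ev (f i) (proj_trm i t)"
        using sa Equ by auto
      then show ?thesis using Equ wf evx by (auto intro: restrict_ext)
    qed
  qed
  then show ?thesis by blast
qed

theorem lemma1:
  fixes L :: "'r lang" and A :: "('r, 'a) struc" and I :: "'i set"
    and n :: nat and S :: "('r, 'i \<Rightarrow> 'a) eqn set"
  assumes "is_struct L A"
    and "I \<noteq> {}"
    and "system L (dpow I A) n S"
  shows "((\<exists>i\<in>I. V A n (proj i ` S) = {}) \<longrightarrow> V (dpow I A) n S = {})
     \<and> (eq_noeth L A \<longrightarrow> V (dpow I A) n S = {} \<longrightarrow>
          (\<exists>S0 \<subseteq> S. finite S0 \<and> V (dpow I A) n S0 = V (dpow I A) n S))"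
proof (intro conjI impI)
  assume "\<exists>i\<in>I. V A n (proj i ` S) = {}"
  then obtain i where "i \<in> I" "V A n (proj i ` S) = {}" by blast
  then show "V (dpow I A) n S = {}" using part1[OF assms(3)] by blast
next
  assume en: "eq_noeth L A" and emp: "V (dpow I A) n S = {}"
  then obtain i where i: "i \<in> I" and vi: "V A n (proj i ` S) = {}"
    using part2[OF assms(3)] by blast
  have sys: "system L A n (proj i ` S)"
    unfolding system_def
  proof
    fix e' assume "e' \<in> proj i ` S"
    then obtain e where e: "e \<in> S" "e' = proj i e" by blast
    then have wf: "wf_eqn L (dpow I A) n e" using assms(3) by (auto simp: system_def)
    have wt: "\<And>t. wf_trm (dpow I A) n t \<Longrightarrow> wf_trm A n (proj_trm i t)"
    proof -
      fix t assume "wf_trm (dpow I A) n t"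
      then show "wf_trm A n (proj_trm i t)" using i by (cases t) (auto simp: dpow_def)
    qed
    show "wf_eqn L A n e'" using wf e wt by (cases e) auto
  qed
  obtain T0 where T0: "T0 \<subseteq> proj i ` S" "finite T0" "V A n T0 = V A n (proj i ` S)"
    using en sys unfolding eq_noeth_def by blast
  obtain S0 where S0: "S0 \<subseteq> S" "finite S0" "T0 = proj i ` S0"
    using finite_subset_image[OF T0(2) T0(1)] by blast
  have "system L (dpow I A) n S0" using assms(3) S0(1) by (auto simp: system_def)
  then have "V (dpow I A) n S0 = {}" using part1 i vi T0(3) S0(3) by metis
  then show "\<exists>S0 \<subseteq> S. finite S0 \<and> V (dpow I A) n S0 = V (dpow I A) n S"
    using S0 emp by blast
qed

end
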